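(* Let $G$ be an irreducible complex algebraic group, $D$ a Zariski dense subgroup of $G$, and $A$ a finitely generated free abelian group. Assume $D$ acts on $A$ via a homomorphism $D\to\mathrm{GL}(A)$ such that this action extends to a rational representation of $G$ on $A\otimes\mathbb{C}$. Let $\mathfrak{X}\subset A\setminus\{0\}$ be the set of all elements $a$ not contained in any proper $G$-invariant subspace of $A\otimes\mathbb{C}$. Then the action of $D$ on $A$ possesses the subgroup displacement property with respect to $\mathfrak{X}$.
   Context: Let $r=\mathrm{rank}(A)$. An action of $D$ on $A$ has the subgroup displacement property with respect to $\mathfrak{X}\subset A\setminus\{0\}$ if for every subgroup $B\subset A$ with $\mathrm{rank}(B)<r$ and every finite subset $X\subset\mathfrak{X}$ there is $g\in D$ such that $g(B)\cap X=\emptyset$. *)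

theory Defs
  imports "HOL-Analysis.Analysis"
begin

text \<open>Linear algebraic groups are modelled as Zariski closed subgroups of GL_n(C),
  matrices being complex^'n^'n.  The coordinate ring of GL_n(C) is generated by the
  matrix entries and the inverse of the determinant.\<close>

definition GL :: "(complex^'n^'n) set" where
  "GL = {M. det M \<noteq> 0}"

inductive_set regfun :: "(complex^'n^'n \<Rightarrow> complex) set" where
  rf_const: "(\<lambda>M. c) \<in> regfun"
| rf_entry: "(\<lambda>M. M $ i $ j) \<in> regfun"
| rf_invdet: "(\<lambda>M. inverse (det M)) \<in> regfun"
| rf_add: "f \<in> regfun \<Longrightarrow> g \<in> regfun \<Longrightarrow> (\<lambda>M. f M + g M) \<in> regfun"
| rf_mult: "f \<in> regfun \<Longrightarrow> g \<in> regfun \<Longrightarrow> (\<lambda>M. f M * g M) \<in> regfun"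

definition zariski_closed :: "(complex^'n^'n) set \<Rightarrow> bool" where
  "zariski_closed S \<longleftrightarrow> (\<exists>F \<subseteq> regfun. S = {M \<in> GL. \<forall>f\<in>F. f M = 0})"

definition zariski_closure :: "(complex^'n^'n) set \<Rightarrow> (complex^'n^'n) set" where
  "zariski_closure S = \<Inter>{Z. zariski_closed Z \<and> S \<subseteq> Z}"

definition matrix_subgroup :: "(complex^'n^'n) set \<Rightarrow> bool" where
  "matrix_subgroup H \<longleftrightarrow> H \<subseteq> GL \<and> mat 1 \<in> H \<and>
     (\<forall>g\<in>H. \<forall>h\<in>H. g ** h \<in> H) \<and> (\<forall>g\<in>H. \<exists>h\<in>H. g ** h = mat 1)"

definition algebraic_group :: "(complex^'n^'n) set \<Rightarrow> bool" where
  "algebraic_group G \<longleftrightarrow> matrix_subgroup G \<and> zariski_closed G"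

definition irreducible_variety :: "(complex^'n^'n) set \<Rightarrow> bool" where
  "irreducible_variety G \<longleftrightarrow> G \<noteq> {} \<and>
     (\<forall>Z1 Z2. zariski_closed Z1 \<longrightarrow> zariski_closed Z2 \<longrightarrow> G \<subseteq> Z1 \<union> Z2 \<longrightarrow> G \<subseteq> Z1 \<or> G \<subseteq> Z2)"

definition rational_rep :: "(complex^'n^'n) set \<Rightarrow> (complex^'n^'n \<Rightarrow> complex^'r^'r) \<Rightarrow> bool" where
  "rational_rep G \<rho> \<longleftrightarrow> (\<forall>g\<in>G. \<rho> g \<in> GL) \<and> (\<forall>g\<in>G. \<forall>h\<in>G. \<rho> (g ** h) = \<rho> g ** \<rho> h) \<and>
     (\<forall>i j. \<exists>f\<in>regfun. \<forall>g\<in>G. f g = \<rho> g $ i $ j)"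

text \<open>The lattice A = Z^r and its embedding into A \<otimes> C = C^r.\<close>
definition emb :: "int^'r \<Rightarrow> complex^'r" where
  "emb a = (\<chi> i. of_int (a $ i))"

definition add_subgroup :: "(int^'r) set \<Rightarrow> bool" where
  "add_subgroup B \<longleftrightarrow> 0 \<in> B \<and> (\<forall>x\<in>B. \<forall>y\<in>B. x + y \<in> B) \<and> (\<forall>x\<in>B. - x \<in> B)"

definition int_independent :: "(int^'r) set \<Rightarrow> bool" where
  "int_independent S \<longleftrightarrow> finite S \<and>
     (\<forall>c. (\<Sum>s\<in>S. c s *s s) = 0 \<longrightarrow> (\<forall>s\<in>S. c s = 0))"

definition int_rank :: "(int^'r) set \<Rightarrow> nat" where
  "int_rank B = Sup {card S | S. S \<subseteq> B \<and> int_independent S}"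

definition csubspace :: "(complex^'r) set \<Rightarrow> bool" where
  "csubspace W \<longleftrightarrow> 0 \<in> W \<and> (\<forall>x\<in>W. \<forall>y\<in>W. x + y \<in> W) \<and> (\<forall>c::complex. \<forall>x\<in>W. c *s x \<in> W)"

definition frakX :: "(complex^'n^'n) set \<Rightarrow> (complex^'n^'n \<Rightarrow> complex^'r^'r) \<Rightarrow> (int^'r) set" where
  "frakX G \<rho> = {a. a \<noteq> 0 \<and> (\<forall>W. csubspace W \<longrightarrow> W \<noteq> UNIV \<longrightarrow>
       (\<forall>g\<in>G. \<forall>w\<in>W. \<rho> g *v w \<in> W) \<longrightarrow> emb a \<notin> W)}"

definition subgroup_displacement ::
  "(complex^'n^'n) set \<Rightarrow> (complex^'n^'n \<Rightarrow> complex^'r^'r) \<Rightarrow> (int^'r) set \<Rightarrow> bool" where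
  "subgroup_displacement D \<rho> XX \<longleftrightarrow>
     (\<forall>B X. add_subgroup B \<longrightarrow> int_rank B < CARD('r) \<longrightarrow> finite X \<longrightarrow> X \<subseteq> XX \<longrightarrow>
        (\<exists>g\<in>D. \<forall>b\<in>B. \<forall>x\<in>X. \<rho> g *v emb b \<noteq> emb x))"

end

theory Submission imports Defs begin

lemma zbound:
  fixes S :: "(int^'r) set"
  assumes "int_independent S" shows "card S \<le> CARD('r)"
proof (rule ccontr)
  assume nle: "\<not> card S \<le> CARD('r)"
  define q :: "int^'r \<Rightarrow> rat^'r" where "q s = (\<chi> i. of_int (s$i))" for s
  have fin: "finite S" using assms int_independent_def by blast
  have inj: "inj q" by (auto simp: q_def vec_eq_iff inj_def)
  have cq: "card (q`S) = card S" using inj by (simp add: card_image inj_on_subset)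
  have "\<not> vec.independent (q`S)"
  proof
    assume "vec.independent (q`S)"
    then have "card (q`S) \<le> vec.dim (UNIV :: (rat^'r) set)"
      using vec.independent_card_le_dim[of "q`S" UNIV] by auto
    then show False using nle cq by (simp add: card_cart_basis)
  qed
  then obtain u where u: "(\<Sum>v\<in>q`S. u v *s v) = 0" and u0: "\<exists>v\<in>q`S. u v \<noteq> 0"
  proof -
    have "finite (q`S)" using fin by simp
    then have "\<exists>u. (\<Sum>v\<in>q`S. u v *s v) = 0 \<and> (\<exists>v\<in>q`S. u v \<noteq> 0)"
      using \<open>\<not> vec.independent (q`S)\<close> unfolding vec.independent_explicit by auto
    then show ?thesis using that by blast
  qed
  define w where "w s = u (q s)" for s
  have sumw: "(\<Sum>s\<in>S. w s *s q s) = 0"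
    using u sum.reindex[of q S "\<lambda>v. u v *s v"] inj unfolding w_def
    by (simp add: inj_on_subset)
  define den where "den s = snd (quotient_of (w s))" for s
  define num where "num s = fst (quotient_of (w s))" for s
  have denpos: "den s > 0" for s unfolding den_def by (rule quotient_of_denom_pos')
  have wdiv: "w s = of_int (num s) / of_int (den s)" for s
    unfolding num_def den_def by (rule quotient_of_div) simp
  define N where "N = (\<Prod>t\<in>S. (of_int (den t) :: rat))"
  have N0: "N \<noteq> 0" unfolding N_def using denpos by (simp add: prod_zero_iff fin less_int_code(1) order_less_imp_not_eq2)
  define c where "c s = (\<Prod>t\<in>S-{s}. den t) * num s" for s
  have cN: "of_int (c s) = N * w s" if "s \<in> S" for s
  proof -
    have "N = of_int (den s) * (\<Prod>t\<in>S-{s}. (of_int (den t) :: rat))"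
      unfolding N_def using prod.remove[OF fin that] by simp
    then show ?thesis unfolding c_def wdiv using denpos[of s]
      by (simp add: field_simps)
  qed
  have "(\<Sum>s\<in>S. c s *s s) = 0"
  proof (subst vec_eq_iff, rule allI)
    fix i
    have "(of_int ((\<Sum>s\<in>S. c s *s s) $ i) :: rat) = (\<Sum>s\<in>S. of_int (c s) * of_int (s $ i))"
      by (simp add: sum_component)
    also have "\<dots> = (\<Sum>s\<in>S. N * (w s * q s $ i))"
      by (rule sum.cong) (auto simp: cN q_def)
    also have "\<dots> = N * (\<Sum>s\<in>S. w s *s q s) $ i"
      by (simp add: sum_component sum_distrib_left)
    also have "\<dots> = 0" using sumw by simp
    finally have "(of_int ((\<Sum>s\<in>S. c s *s s) $ i) :: rat) = 0" .
    then show "(\<Sum>s\<in>S. c s *s s) $ i = 0 $ i" unfolding zero_index of_int_eq_0_iff .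
  qed
  then have "\<forall>s\<in>S. c s = 0" using assms unfolding int_independent_def by blast
  moreover obtain s0 where "s0 \<in> S" "w s0 \<noteq> 0" using u0 w_def by auto
  ultimately show False using cN[of s0] N0 by auto
qed

lemma rank_bdd: "bdd_above {card S | S. S \<subseteq> (B::(int^'r) set) \<and> int_independent S}"
  unfolding bdd_above_def using zbound by blast

lemma emb_inj: "inj emb"
  by (auto simp: emb_def vec_eq_iff inj_def)

lemma span_rank:
  fixes B :: "(int^'r) set"
  assumes "vec.span (emb ` B) = UNIV"
  shows "CARD('r) \<le> int_rank B"
proof -
  obtain B' where B': "B' \<subseteq> emb`B" "vec.independent B'" "emb`B \<subseteq> vec.span B'" "card B' = vec.dim (emb`B)"
    using vec.basis_exists by blast
  have "vec.dim (emb`B) = vec.dim (vec.span (emb`B))" by simp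
  also have "\<dots> = CARD('r)" using assms by (simp add: card_cart_basis)
  finally have cB': "card B' = CARD('r)" using B' by simp
  define S where "S = B \<inter> emb -` B'"
  have eS: "emb ` S = B'" using B' unfolding S_def by auto
  have finB': "finite B'" using B'(2) vec.independent_bound_general by blast
  have injS: "inj_on emb S" using emb_inj unfolding inj_def inj_on_def by blast
  have finS: "finite S" using eS finB' injS finite_image_iff by blast
  have cS: "card S = CARD('r)" using cB' eS injS card_image by fastforce
  have "int_independent S"
    unfolding int_independent_def
  proof (intro conjI finS allI impI ballI)
    fix c s assume c: "(\<Sum>s\<in>S. c s *s s) = 0" and s: "s \<in> S"
    define u where "u v = (of_int (c (the_inv_into S emb v)) :: complex)" for v
    have "(\<Sum>v\<in>B'. u v *s v) = (\<Sum>t\<in>S. u (emb t) *s emb t)"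
      using sum.reindex[OF injS, of "\<lambda>v. u v *s v"] eS by simp
    also have "\<dots> = (\<Sum>t\<in>S. of_int (c t) *s emb t)"
      by (rule sum.cong) (auto simp: u_def the_inv_into_f_f[OF injS])
    also have "\<dots> = 0"
    proof (subst vec_eq_iff, rule allI)
      fix i
      have "(\<Sum>t\<in>S. of_int (c t) *s emb t) $ i = of_int ((\<Sum>s\<in>S. c s *s s) $ i)"
        by (simp add: sum_component emb_def)
      then show "(\<Sum>t\<in>S. of_int (c t) *s emb t) $ i = 0 $ i" using c by simp
    qed
    finally have "\<forall>v\<in>B'. u v = 0" using B'(2) vec.independent_explicit by blast
    then have "u (emb s) = 0" using s eS by auto
    then show "c s = 0" by (simp add: u_def the_inv_into_f_f[OF injS s])
  qed
  then have "CARD('r) \<in> {card S | S. S \<subseteq> B \<and> int_independent S}"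
    using cS unfolding S_def by (intro CollectI exI[of _ S]) (auto simp: S_def)
  then show ?thesis unfolding int_rank_def using rank_bdd by (rule cSup_upper)
qed


lemma functional:
  fixes B :: "(int^'r) set"
  assumes "int_rank B < CARD('r)"
  obtains cc :: "'r \<Rightarrow> complex" where "\<forall>b\<in>B. (\<Sum>i\<in>UNIV. cc i * emb b $ i) = 0"
    "\<exists>v. (\<Sum>i\<in>UNIV. cc i * v $ i) \<noteq> 0"
proof -
  have "vec.span (emb ` B) \<noteq> UNIV" using span_rank[of B] assms by linarith
  then obtain v :: "complex^'r" where v: "v \<notin> vec.span (emb`B)" by blast
  obtain Bw where Bw: "Bw \<subseteq> emb`B" "vec.independent Bw" "emb`B \<subseteq> vec.span Bw"
    using vec.basis_exists by metis
  have vB: "v \<notin> vec.span Bw" using v Bw(1) vec.span_mono by blast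
  then have ind: "vec.independent (insert v Bw)" using vec.independent_insertI Bw(2) by blast
  obtain g :: "complex^'r \<Rightarrow> complex^'r" where g: "Vector_Spaces.linear (*s) (*s) g"
     "\<forall>x\<in>insert v Bw. g x = (if x = v then 1 else 0)"
    using vec.linear_independent_extend[OF ind, of "\<lambda>x. if x = v then 1 else 0"] by blast
  define k where "k = (undefined :: 'r)"
  define cc where "cc i = g (axis i 1) $ k" for i
  have lin: "(\<Sum>i\<in>UNIV. cc i * y $ i) = g y $ k" for y
    using linear_componentwise[OF g(1), of y k] by (simp add: cc_def mult.commute)
  show ?thesis
  proof (rule that)
    show "\<forall>b\<in>B. (\<Sum>i\<in>UNIV. cc i * emb b $ i) = 0"
    proof
      fix b assume "b \<in> B"
      then have "emb b \<in> vec.span Bw" using Bw(3) by blast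
      moreover have "\<And>x. x \<in> Bw \<Longrightarrow> g x = 0" using g(2) vB vec.span_base by fastforce
      ultimately have "g (emb b) = 0" using vec.linear_eq_0_on_span[OF g(1)] by blast
      then show "(\<Sum>i\<in>UNIV. cc i * emb b $ i) = 0" using lin by simp
    qed
    show "\<exists>v. (\<Sum>i\<in>UNIV. cc i * v $ i) \<noteq> 0"
      using lin[of v] g(2) by (intro exI[of _ v]) simp
  qed
qed

lemma rf_sum: "finite S \<Longrightarrow> (\<forall>s\<in>S. f s \<in> regfun) \<Longrightarrow> (\<lambda>M. \<Sum>s\<in>S. f s M) \<in> regfun"
proof (induction S rule: finite_induct)
  case empty then show ?case using rf_const[of 0] by simp
next
  case (insert x F) then show ?case using rf_add[of "f x" "\<lambda>M. \<Sum>s\<in>F. f s M"] by simp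
qed

lemma rf_prod: "finite S \<Longrightarrow> (\<forall>s\<in>S. f s \<in> regfun) \<Longrightarrow> (\<lambda>M. \<Prod>s\<in>S. f s M) \<in> regfun"
proof (induction S rule: finite_induct)
  case empty then show ?case using rf_const[of 1] by simp
next
  case (insert x F) then show ?case using rf_mult[of "f x" "\<lambda>M. \<Prod>s\<in>F. f s M"] by simp
qed

lemma closed_zero:
  assumes "zariski_closed G" "f \<in> regfun"
  shows "zariski_closed {h\<in>G. f h = 0}"
proof -
  obtain F where F: "F \<subseteq> regfun" "G = {M \<in> GL. \<forall>f\<in>F. f M = 0}"
    using assms(1) unfolding zariski_closed_def by blast
  show ?thesis unfolding zariski_closed_def
    by (rule exI[of _ "insert f F"]) (use F assms(2) in auto)
qed

lemma irred_prod:
  assumes irr: "irreducible_variety G" and cl: "zariski_closed G"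
  shows "finite X \<Longrightarrow> (\<forall>x\<in>X. \<phi> x \<in> regfun) \<Longrightarrow> (\<forall>h\<in>G. (\<Prod>x\<in>X. \<phi> x h) = 0)
    \<Longrightarrow> \<exists>x\<in>X. \<forall>h\<in>G. \<phi> x h = 0"
proof (induction X rule: finite_induct)
  case empty
  then show ?case using irr unfolding irreducible_variety_def by auto
next
  case (insert y X)
  have c1: "zariski_closed {h\<in>G. \<phi> y h = 0}" using closed_zero[OF cl] insert by simp
  have c2: "zariski_closed {h\<in>G. (\<Prod>x\<in>X. \<phi> x h) = 0}"
    using closed_zero[OF cl rf_prod[of X \<phi>]] insert by simp
  have "G \<subseteq> {h\<in>G. \<phi> y h = 0} \<union> {h\<in>G. (\<Prod>x\<in>X. \<phi> x h) = 0}"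
    using insert by auto
  then have "G \<subseteq> {h\<in>G. \<phi> y h = 0} \<or> G \<subseteq> {h\<in>G. (\<Prod>x\<in>X. \<phi> x h) = 0}"
    using irr c1 c2 unfolding irreducible_variety_def by blast
  then show ?case using insert by blast
qed

lemma rho_one:
  assumes "rational_rep G \<rho>" "mat 1 \<in> G"
  shows "\<rho> (mat 1) = mat 1"
proof -
  have e: "\<rho> (mat 1) = \<rho> (mat 1) ** \<rho> (mat 1)"
    using assms unfolding rational_rep_def by (metis matrix_mul_lid)
  have "det (\<rho> (mat 1)) \<noteq> 0" using assms unfolding rational_rep_def GL_def by blast
  then have "invertible (\<rho> (mat 1))" by (simp add: invertible_det_nz)
  then obtain N where N: "N ** \<rho> (mat 1) = mat 1" unfolding invertible_def by blast
  have "\<rho> (mat 1) = (N ** \<rho> (mat 1)) ** \<rho> (mat 1)" using N by simp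
  also have "\<dots> = N ** \<rho> (mat 1)" using e by (metis matrix_mul_assoc)
  finally show ?thesis using N by simp
qed

theorem proposition4p1:
  fixes G D :: "(complex^'n^'n) set"
    and \<rho> :: "complex^'n^'n \<Rightarrow> complex^'r^'r"
  assumes "algebraic_group G"
    and "irreducible_variety G"
    and "matrix_subgroup D" and "D \<subseteq> G"
    and "zariski_closure D = G"
    and "rational_rep G \<rho>"
    and "\<forall>d\<in>D. \<forall>i j. \<rho> d $ i $ j \<in> \<int>"
  shows "subgroup_displacement D \<rho> (frakX G \<rho>)"
proof -
  note rr = assms(6)
  have clG: "zariski_closed G" using assms(1) unfolding algebraic_group_def by blast
  obtain F where F: "\<And>i j. F i j \<in> regfun" "\<And>i j g. g \<in> G \<Longrightarrow> F i j g = \<rho> g $ i $ j"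
    using rr unfolding rational_rep_def by metis
  have oneD: "mat 1 \<in> D" using assms(3) unfolding matrix_subgroup_def by blast
  have one: "\<rho> (mat 1) = mat 1" using rho_one[OF rr] oneD assms(4) by blast
  have hom: "\<And>g h. g \<in> G \<Longrightarrow> h \<in> G \<Longrightarrow> \<rho> (g ** h) = \<rho> g ** \<rho> h"
    using rr unfolding rational_rep_def by blast
  show ?thesis unfolding subgroup_displacement_def
  proof (intro allI impI)
    fix B X :: "(int^'r) set"
    assume rk: "int_rank B < CARD('r)" and finX: "finite X" and XX: "X \<subseteq> frakX G \<rho>"
    obtain cc :: "'r \<Rightarrow> complex" where cc: "\<forall>b\<in>B. (\<Sum>i\<in>UNIV. cc i * emb b $ i) = 0"
      "\<exists>v. (\<Sum>i\<in>UNIV. cc i * v $ i) \<noteq> 0"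
      using functional[OF rk] by blast
    define l where "l y = (\<Sum>i\<in>UNIV. cc i * y $ i)" for y :: "complex^'r"
    define \<phi> where "\<phi> x h = (\<Sum>i\<in>UNIV. cc i * (\<Sum>j\<in>UNIV. F i j h * emb x $ j))" for x h
    have \<phi>reg: "\<phi> x \<in> regfun" for x
      unfolding \<phi>_def
      by (intro rf_sum ballI rf_mult rf_const F) simp_all
    have \<phi>G: "\<phi> x h = l (\<rho> h *v emb x)" if "h \<in> G" for x h
      using that by (simp add: \<phi>_def l_def F matrix_vector_mult_def)
    show "\<exists>g\<in>D. \<forall>b\<in>B. \<forall>x\<in>X. \<rho> g *v emb b \<noteq> emb x"
    proof (rule ccontr)
      assume "\<not> (\<exists>g\<in>D. \<forall>b\<in>B. \<forall>x\<in>X. \<rho> g *v emb b \<noteq> emb x)"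
      then have H: "\<forall>g\<in>D. \<exists>b\<in>B. \<exists>x\<in>X. \<rho> g *v emb b = emb x" by blast
      have DZ: "D \<subseteq> {h\<in>G. (\<Prod>x\<in>X. \<phi> x h) = 0}"
      proof
        fix h assume h: "h \<in> D"
        obtain g where g: "g \<in> D" "h ** g = mat 1"
          using assms(3) h unfolding matrix_subgroup_def by blast
        obtain b x where bx: "b \<in> B" "x \<in> X" "\<rho> g *v emb b = emb x" using H g by blast
        have hG: "h \<in> G" and gG: "g \<in> G" using h g assms(4) by auto
        have "\<rho> h *v emb x = \<rho> h *v (\<rho> g *v emb b)" using bx by simp
        also have "\<dots> = \<rho> (h ** g) *v emb b" using hom[OF hG gG] by (simp add: matrix_vector_mul_assoc)
        also have "\<dots> = emb b" using g one by simp
        finally have "\<phi> x h = 0" using \<phi>G[OF hG] cc(1) bx(1) unfolding l_def by simp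
        then have "(\<Prod>x\<in>X. \<phi> x h) = 0" using finX bx(2) by (meson prod_zero)
        then show "h \<in> {h\<in>G. (\<Prod>x\<in>X. \<phi> x h) = 0}" using hG by simp
      qed
      have "zariski_closed {h\<in>G. (\<Prod>x\<in>X. \<phi> x h) = 0}"
        using closed_zero[OF clG rf_prod[OF finX]] \<phi>reg by blast
      then have "G \<subseteq> {h\<in>G. (\<Prod>x\<in>X. \<phi> x h) = 0}"
        using DZ assms(5) unfolding zariski_closure_def by blast
      then obtain x where x: "x \<in> X" "\<forall>h\<in>G. \<phi> x h = 0"
        using irred_prod[OF assms(2) clG finX] \<phi>reg by blast
      define U where "U = {w. \<forall>h\<in>G. l (\<rho> h *v w) = 0}"
      have Gmul: "\<And>g h. g \<in> G \<Longrightarrow> h \<in> G \<Longrightarrow> g ** h \<in> G"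
        using assms(1) unfolding algebraic_group_def matrix_subgroup_def by blast
      have ladd: "l (y + z) = l y + l z" for y z
        unfolding l_def by (simp add: sum.distrib distrib_left)
      have lsc: "l (c *s y) = c * l y" for c y
        unfolding l_def by (simp add: sum_distrib_left algebra_simps)
      have msc: "A *v (c *s y) = c *s (A *v y)" for A :: "complex^'r^'r" and c y
        by (simp add: vec_eq_iff matrix_vector_mult_def sum_distrib_left algebra_simps)
      have l0: "l 0 = 0"
        by (simp add: l_def)
      have "csubspace U"
        unfolding csubspace_def U_def
        by (auto simp: ladd lsc msc matrix_vector_right_distrib l0)
      moreover have "U \<noteq> UNIV"
      proof
        assume "U = UNIV"
        obtain v where "l v \<noteq> 0" using cc(2) l_def by auto
        moreover have "v \<in> U" using \<open>U = UNIV\<close> by simp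
        ultimately show False using one oneD assms(4) unfolding U_def by fastforce
      qed
      moreover have "\<forall>g\<in>G. \<forall>w\<in>U. \<rho> g *v w \<in> U"
      proof (intro ballI)
        fix g w assume g: "g \<in> G" and w: "w \<in> U"
        show "\<rho> g *v w \<in> U" unfolding U_def
        proof (intro CollectI ballI)
          fix h assume h: "h \<in> G"
          have "\<rho> h *v (\<rho> g *v w) = \<rho> (h ** g) *v w"
            using hom[OF h g] by (simp add: matrix_vector_mul_assoc)
          then show "l (\<rho> h *v (\<rho> g *v w)) = 0" using w Gmul[OF h g] unfolding U_def by simp
        qed
      qed
      moreover have "emb x \<in> U" using x \<phi>G unfolding U_def by simp
      ultimately show False using XX x(1) unfolding frakX_def by blast
    qed
  qed
qed

end
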